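(* Let $\mathbb{Z}[t]$ be the polynomial ring in one variable over $\mathbb{Z}$. For all integers $j,r\ge1$ and all primes $p$, the cohomology group $H^j(\Gamma(SL_2(\mathbb{Z}[t]),p^r);\mathbb{F}_p)$ is not finitely generated (as an $\mathbb{F}_p$-vector space).
   Context: $\Gamma(SL_2(\mathbb{Z}[t]),p^r)=\ker\big(SL_2(\mathbb{Z}[t])\to SL_2(\mathbb{Z}[t]\otimes_{\mathbb{Z}}\mathbb{Z}/p^r)\big)$; cohomology is group cohomology with trivial coefficients $\mathbb{F}_p$. *)

theory Defs
  imports "HOL-Computational_Algebra.Polynomial" "HOL-Algebra.Group"
begin

text \<open>A 2x2 matrix (a b; c d) over Z[t] is encoded as the tuple (a, b, c, d).\<close>
type_synonym mat2 = "int poly \<times> int poly \<times> int poly \<times> int poly"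

fun mat2_mult :: "mat2 \<Rightarrow> mat2 \<Rightarrow> mat2" where
  "mat2_mult (a, b, c, d) (a', b', c', d') =
     (a * a' + b * c', a * b' + b * d', c * a' + d * c', c * b' + d * d')"

definition mat2_one :: mat2 where "mat2_one = (1, 0, 0, 1)"

fun mat2_det :: "mat2 \<Rightarrow> int poly" where
  "mat2_det (a, b, c, d) = a * d - b * c"

text \<open>A polynomial over Z is zero modulo m iff all its coefficients are divisible by m,
  i.e. it lies in the kernel of Z[t] -> Z[t] tensor Z/m = (Z/m)[t].\<close>
definition poly_zero_mod :: "int \<Rightarrow> int poly \<Rightarrow> bool" where
  "poly_zero_mod m q \<longleftrightarrow> (\<forall>i. m dvd coeff q i)"

fun in_Gamma :: "int \<Rightarrow> nat \<Rightarrow> mat2 \<Rightarrow> bool" where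
  "in_Gamma p r (a, b, c, d) \<longleftrightarrow>
     a * d - b * c = 1 \<and>
     poly_zero_mod (p ^ r) (a - 1) \<and> poly_zero_mod (p ^ r) b \<and>
     poly_zero_mod (p ^ r) c \<and> poly_zero_mod (p ^ r) (d - 1)"

definition Gamma :: "int \<Rightarrow> nat \<Rightarrow> mat2 monoid" where
  "Gamma p r = \<lparr> carrier = {M. in_Gamma p r M}, mult = mat2_mult, one = mat2_one \<rparr>"

text \<open>An n-cochain is a function on n-tuples (lists of length n) of group elements;
  values are integers read modulo p (i.e. elements of F_p).\<close>

definition merge_at :: "('a, 'b) monoid_scheme \<Rightarrow> nat \<Rightarrow> 'a list \<Rightarrow> 'a list" where
  "merge_at G i gs = take i gs @ [gs ! i \<otimes>\<^bsub>G\<^esub> gs ! (i + 1)] @ drop (i + 2) gs"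

definition cobdry :: "('a, 'b) monoid_scheme \<Rightarrow> nat \<Rightarrow> ('a list \<Rightarrow> int) \<Rightarrow> 'a list \<Rightarrow> int" where
  "cobdry G n f gs = f (tl gs) + (\<Sum>i<n. (-1) ^ (i + 1) * f (merge_at G i gs))
                      + (-1) ^ (n + 1) * f (butlast gs)"

definition tuples :: "('a, 'b) monoid_scheme \<Rightarrow> nat \<Rightarrow> 'a list set" where
  "tuples G n = {gs. length gs = n \<and> set gs \<subseteq> carrier G}"

definition is_cocycle :: "('a, 'b) monoid_scheme \<Rightarrow> int \<Rightarrow> nat \<Rightarrow> ('a list \<Rightarrow> int) \<Rightarrow> bool" where
  "is_cocycle G p n f \<longleftrightarrow> (\<forall>gs \<in> tuples G (n + 1). p dvd cobdry G n f gs)"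

definition is_coboundary :: "('a, 'b) monoid_scheme \<Rightarrow> int \<Rightarrow> nat \<Rightarrow> ('a list \<Rightarrow> int) \<Rightarrow> bool" where
  "is_coboundary G p n f \<longleftrightarrow>
     (\<exists>h. \<forall>gs \<in> tuples G n. p dvd (f gs - cobdry G (n - 1) h gs))"

text \<open>H^n(G; F_p) (n \<ge> 1) is finitely generated as an F_p-vector space: there are finitely
  many cocycles whose classes span Z^n / B^n.\<close>
definition cohom_fin_gen :: "('a, 'b) monoid_scheme \<Rightarrow> int \<Rightarrow> nat \<Rightarrow> bool" where
  "cohom_fin_gen G p n \<longleftrightarrow>
     (\<exists>cs :: ('a list \<Rightarrow> int) list.
        (\<forall>c \<in> set cs. is_cocycle G p n c) \<and>
        (\<forall>f. is_cocycle G p n f \<longrightarrow>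
           (\<exists>a :: nat \<Rightarrow> int.
              is_coboundary G p n (\<lambda>gs. f gs - (\<Sum>k<length cs. a k * (cs ! k) gs)))))"

end

theory Submission
  imports Defs "HOL-Algebra.Sym_Groups"
begin


definition chainL :: "(nat \<Rightarrow> 'a) \<Rightarrow> nat \<Rightarrow> (nat \<Rightarrow> nat) \<Rightarrow> 'a list" where
  "chainL e N \<sigma> = map (\<lambda>m. e (\<sigma> m)) [0..<N]"

definition pairing :: "('a list \<Rightarrow> int) \<Rightarrow> (nat \<Rightarrow> 'a) \<Rightarrow> nat \<Rightarrow> int" where
  "pairing F e N = (\<Sum>\<sigma>\<in>{\<sigma>. \<sigma> permutes {..<N}}. sign \<sigma> * F (chainL e N \<sigma>))"

fun R :: "nat \<Rightarrow> nat \<Rightarrow> nat" where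
  "R 0 = id" | "R (Suc k) = R k \<circ> transpose k (Suc k)"

lemma R_apply: "R k m = (if m < k then Suc m else if m = k then 0 else m)"
  by (induction k arbitrary: m) (auto simp: transpose_def)

lemma R_permutes: "R k permutes {..k}"
proof (induction k)
  case 0 then show ?case by (metis R.simps(1) permutes_id)
next
  case (Suc k)
  have a: "R k permutes {..Suc k}" using Suc permutes_subset by fastforce
  have b: "transpose k (Suc k) permutes {..Suc k}" by (rule permutes_swap_id) auto
  show ?case using permutes_compose[OF b a] by (simp only: R.simps)
qed

lemma R_sign: "sign (R k) = ((-1::int) ^ k)"
proof (induction k)
  case 0 then show ?case by simp
next
  case (Suc k)
  have "permutation (R k)" using R_permutes permutation_permutes by blast
  moreover have "permutation (transpose k (Suc k))" by (simp add: permutation_swap_id)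
  ultimately have "sign (R k \<circ> transpose k (Suc k)) = sign (R k) * sign (transpose k (Suc k))"
    by (rule sign_compose)
  then show ?case using Suc by (simp only: R.simps) (simp add: sign_swap_id)
qed

lemma perm_of_S: "\<sigma> permutes {..<(N::nat)} \<Longrightarrow> permutation \<sigma>"
  unfolding permutation_permutes by (intro exI[of _ "{..<N}"]) simp

lemma merge_at_nth:
  assumes "i < n" "length gs = Suc n" "m < n"
  shows "merge_at G i gs ! m = (if m < i then gs!m else if m = i then gs!i \<otimes>\<^bsub>G\<^esub> gs!Suc i else gs ! Suc m)"
proof -
  have lt: "length (take i gs) = i" using assms by simp
  have e: "merge_at G i gs = take i gs @ (gs!i \<otimes>\<^bsub>G\<^esub> gs!Suc i) # drop (Suc (Suc i)) gs"
    by (simp add: merge_at_def)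
  consider "m < i" | "m = i" | "i < m" by linarith
  then show ?thesis
  proof cases
    case 1
    then show ?thesis unfolding e using lt by (simp add: nth_append)
  next
    case 2
    then show ?thesis unfolding e using lt by (metis nth_append_length less_irrefl)
  next
    case 3
    have "(take i gs @ (gs!i \<otimes>\<^bsub>G\<^esub> gs!Suc i) # drop (Suc (Suc i)) gs) ! m
        = ((gs!i \<otimes>\<^bsub>G\<^esub> gs!Suc i) # drop (Suc (Suc i)) gs) ! (m - i)"
      using lt 3 by (simp add: nth_append)
    also have "\<dots> = drop (Suc (Suc i)) gs ! (m - i - 1)"
      using 3 by (simp add: nth_Cons')
    also have "\<dots> = gs ! Suc m" using 3 assms by simp
    finally show ?thesis unfolding e using 3 by simp
  qed
qed

lemma merge_at_len: "i < n \<Longrightarrow> length gs = Suc n \<Longrightarrow> length (merge_at G i gs) = n"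
  by (simp add: merge_at_def)

lemma cycle:
  fixes G (structure) and e :: "nat \<Rightarrow> 'a" and h :: "'a list \<Rightarrow> int"
  assumes comm: "\<And>a b. e a \<otimes> e b = e b \<otimes> e a"
  shows "pairing (cobdry G n h) e (Suc n) = 0"
proof -
  define S where "S = {\<sigma>. \<sigma> permutes {..<Suc n}}"
  define L where "L = chainL e (Suc n)"
  have Lnth: "\<And>\<sigma> m. m < Suc n \<Longrightarrow> L \<sigma> ! m = e (\<sigma> m)"
    by (simp add: L_def chainL_def del: upt_Suc)
  have Llen: "\<And>\<sigma>. length (L \<sigma>) = Suc n" by (simp add: L_def chainL_def)
  have merge0: "(\<Sum>\<sigma>\<in>S. sign \<sigma> * h (merge_at G i (L \<sigma>))) = 0" if i: "i < n" for i
  proof -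
    let ?t = "transpose i (Suc i)"
    have tp: "?t permutes {..<Suc n}" by (rule permutes_swap_id) (use i in auto)
    have mL: "merge_at G i (L (\<sigma> \<circ> ?t)) = merge_at G i (L \<sigma>)" for \<sigma>
    proof (rule nth_equalityI)
      show "length (merge_at G i (L (\<sigma> \<circ> ?t))) = length (merge_at G i (L \<sigma>))"
        by (simp add: merge_at_def Llen)
    next
      fix m assume "m < length (merge_at G i (L (\<sigma> \<circ> ?t)))"
      then have m: "m < n" using i by (simp add: merge_at_def Llen)
      show "merge_at G i (L (\<sigma> \<circ> ?t)) ! m = merge_at G i (L \<sigma>) ! m"
        using i m by (auto simp: merge_at_nth Llen Lnth comm)
    qed
    have "(\<Sum>\<sigma>\<in>S. sign \<sigma> * h (merge_at G i (L \<sigma>)))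
        = (\<Sum>\<sigma>\<in>S. sign (\<sigma> \<circ> ?t) * h (merge_at G i (L (\<sigma> \<circ> ?t))))"
      unfolding S_def by (rule sum_permutations_compose_right[OF tp])
    also have "\<dots> = - (\<Sum>\<sigma>\<in>S. sign \<sigma> * h (merge_at G i (L \<sigma>)))"
      unfolding sum_negf[symmetric]
    proof (rule sum.cong[OF refl])
      fix \<sigma> assume "\<sigma> \<in> S"
      then have "permutation \<sigma>" by (auto simp: S_def perm_of_S)
      then show "sign (\<sigma> \<circ> ?t) * h (merge_at G i (L (\<sigma> \<circ> ?t))) = - (sign \<sigma> * h (merge_at G i (L \<sigma>)))"
        by (simp add: mL sign_compose permutation_swap_id sign_swap_id)
    qed
    finally show ?thesis by simp
  qed
  have Rp: "R n permutes {..<Suc n}" using R_permutes[of n] by (simp add: lessThan_Suc_atMost)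
  have bt: "butlast (L (\<sigma> \<circ> R n)) = tl (L \<sigma>)" for \<sigma>
    by (rule nth_equalityI) (auto simp: Llen nth_butlast nth_tl Lnth R_apply)
  have rot: "(\<Sum>\<sigma>\<in>S. sign \<sigma> * h (butlast (L \<sigma>))) = (-1)^n * (\<Sum>\<sigma>\<in>S. sign \<sigma> * h (tl (L \<sigma>)))"
  proof -
    have "(\<Sum>\<sigma>\<in>S. sign \<sigma> * h (butlast (L \<sigma>)))
        = (\<Sum>\<sigma>\<in>S. sign (\<sigma> \<circ> R n) * h (butlast (L (\<sigma> \<circ> R n))))"
      unfolding S_def by (rule sum_permutations_compose_right[OF Rp])
    also have "\<dots> = (\<Sum>\<sigma>\<in>S. (-1)^n * (sign \<sigma> * h (tl (L \<sigma>))))"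
    proof (rule sum.cong[OF refl])
      fix \<sigma> assume "\<sigma> \<in> S"
      then have "permutation \<sigma>" by (auto simp: S_def perm_of_S)
      moreover have "permutation (R n)" using Rp perm_of_S by blast
      ultimately show "sign (\<sigma> \<circ> R n) * h (butlast (L (\<sigma> \<circ> R n))) = (-1)^n * (sign \<sigma> * h (tl (L \<sigma>)))"
        by (simp add: bt sign_compose R_sign)
    qed
    finally show ?thesis by (simp add: sum_distrib_left)
  qed
  define rhs where "rhs = (\<Sum>\<sigma>\<in>S. sign \<sigma> * h (tl (L \<sigma>)))
        + (\<Sum>i<n. (-1) ^ (i + 1) * (\<Sum>\<sigma>\<in>S. sign \<sigma> * h (merge_at G i (L \<sigma>))))
        + (-1) ^ (n + 1) * (\<Sum>\<sigma>\<in>S. sign \<sigma> * h (butlast (L \<sigma>)))"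
  have "pairing (cobdry G n h) e (Suc n) = rhs"
  proof -
    have "pairing (cobdry G n h) e (Suc n) = (\<Sum>\<sigma>\<in>S. sign \<sigma> * h (tl (L \<sigma>))
        + (\<Sum>i<n. (-1) ^ (i + 1) * (sign \<sigma> * h (merge_at G i (L \<sigma>))))
        + (-1) ^ (n + 1) * (sign \<sigma> * h (butlast (L \<sigma>))))"
      unfolding pairing_def cobdry_def S_def[symmetric] L_def[symmetric]
      by (rule sum.cong[OF refl]) (simp add: right_diff_distrib distrib_left sum_distrib_left mult.left_commute)
    also have "\<dots> = (\<Sum>\<sigma>\<in>S. sign \<sigma> * h (tl (L \<sigma>)))
        + (\<Sum>\<sigma>\<in>S. \<Sum>i<n. (-1) ^ (i + 1) * (sign \<sigma> * h (merge_at G i (L \<sigma>))))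
        + (\<Sum>\<sigma>\<in>S. (-1) ^ (n + 1) * (sign \<sigma> * h (butlast (L \<sigma>))))"
      by (simp only: sum.distrib)
    also have "\<dots> = rhs" unfolding rhs_def
      by (simp only: sum.swap[of _ S] sum_distrib_left)
    finally show ?thesis .
  qed
  also have "rhs = 0" unfolding rhs_def using merge0 rot by simp
  finally show ?thesis .
qed



lemma telescope: "A 0 + (\<Sum>i<n. (-1)^(i+1) * (A i + A (Suc i))) + (-1)^(n+1) * A n = (0::int)"
  by (induction n) (simp_all add: distrib_left)

lemma cup_cocycle:
  fixes G (structure) and \<psi> :: "nat \<Rightarrow> 'a \<Rightarrow> int"
  assumes add: "\<And>m x y. x \<in> carrier G \<Longrightarrow> y \<in> carrier G \<Longrightarrow> p dvd \<psi> m (x \<otimes> y) - \<psi> m x - \<psi> m y"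
  shows "is_cocycle G p n (\<lambda>gs. \<Prod>m<n. \<psi> m (gs!m))"
  unfolding is_cocycle_def tuples_def
proof (intro ballI, clarify)
  fix gs :: "'a list" assume len: "length gs = n + 1" and car: "set gs \<subseteq> carrier G"
  define f where "f = (\<lambda>gs. \<Prod>m<n. \<psi> m (gs!m))"
  define A where "A i = (\<Prod>m<n. \<psi> m (gs ! (if m < i then m else Suc m)))" for i
  have t: "f (tl gs) = A 0" unfolding f_def A_def
    by (rule prod.cong[OF refl]) (use len in \<open>simp add: nth_tl\<close>)
  have b: "f (butlast gs) = A n" unfolding f_def A_def
    by (rule prod.cong[OF refl]) (use len in \<open>simp add: nth_butlast\<close>)
  have mg: "p dvd f (merge_at G i gs) - A i - A (Suc i)" if i: "i < n" for i
  proof -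
    define Q where "Q = (\<Prod>m\<in>{..<n}-{i}. \<psi> m (gs ! (if m < i then m else Suc m)))"
    have ii: "i \<in> {..<n}" using i by simp
    have gi: "gs ! i \<in> carrier G" "gs ! Suc i \<in> carrier G"
      using car len i nth_mem[of i gs] nth_mem[of "Suc i" gs] by auto
    have "f (merge_at G i gs) = \<psi> i (merge_at G i gs ! i) * (\<Prod>m\<in>{..<n}-{i}. \<psi> m (merge_at G i gs ! m))"
      unfolding f_def by (rule prod.remove[OF _ ii]) simp
    also have "(\<Prod>m\<in>{..<n}-{i}. \<psi> m (merge_at G i gs ! m)) = Q"
      unfolding Q_def by (rule prod.cong[OF refl]) (use len i in \<open>auto simp: merge_at_nth\<close>)
    finally have f1: "f (merge_at G i gs) = \<psi> i (gs ! i \<otimes> gs ! Suc i) * Q"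
      using len i by (simp add: merge_at_nth)
    have a1: "A i = \<psi> i (gs ! Suc i) * Q"
      unfolding A_def Q_def by (subst prod.remove[OF _ ii]) simp_all
    have "A (Suc i) = \<psi> i (gs ! i) * (\<Prod>m\<in>{..<n}-{i}. \<psi> m (gs ! (if m < Suc i then m else Suc m)))"
      unfolding A_def by (subst prod.remove[OF _ ii]) simp_all
    also have "(\<Prod>m\<in>{..<n}-{i}. \<psi> m (gs ! (if m < Suc i then m else Suc m))) = Q"
      unfolding Q_def by (rule prod.cong[OF refl]) auto
    finally have a2: "A (Suc i) = \<psi> i (gs ! i) * Q" .
    have "f (merge_at G i gs) - A i - A (Suc i) = (\<psi> i (gs ! i \<otimes> gs ! Suc i) - \<psi> i (gs ! i) - \<psi> i (gs ! Suc i)) * Q"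
      using f1 a1 a2 by (simp add: algebra_simps)
    then show ?thesis using add[OF gi] by simp
  qed
  have "cobdry G n f gs = cobdry G n f gs - (A 0 + (\<Sum>i<n. (-1)^(i+1) * (A i + A (Suc i))) + (-1)^(n+1) * A n)"
    using telescope[of A n] by simp
  also have "\<dots> = (\<Sum>i<n. (-1)^(i+1) * (f (merge_at G i gs) - A i - A (Suc i)))"
  proof -
    have "(\<Sum>i<n. (-1)^(i+1) * f (merge_at G i gs)) - (\<Sum>i<n. (-1)^(i+1) * (A i + A (Suc i)))
        = (\<Sum>i<n. (-1)^(i+1) * f (merge_at G i gs) - (-1)^(i+1) * (A i + A (Suc i)))"
      by (rule sum_subtractf[symmetric])
    also have "\<dots> = (\<Sum>i<n. (-1)^(i+1) * (f (merge_at G i gs) - A i - A (Suc i)))"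
      by (rule sum.cong[OF refl]) (simp add: right_diff_distrib distrib_left)
    finally show ?thesis unfolding cobdry_def t b by simp
  qed
  finally have "cobdry G n f gs = (\<Sum>i<n. (-1)^(i+1) * (f (merge_at G i gs) - A i - A (Suc i)))" .
  moreover have "p dvd (\<Sum>i<n. (-1)^(i+1) * (f (merge_at G i gs) - A i - A (Suc i)))"
    by (rule dvd_sum) (simp add: mg)
  ultimately show "p dvd cobdry G n (\<lambda>gs. \<Prod>m<n. \<psi> m (gs!m)) gs" unfolding f_def by simp
qed



definition Emat :: "int \<Rightarrow> nat \<Rightarrow> nat \<Rightarrow> mat2" where
  "Emat p r k = (1, smult (p ^ r) (monom 1 k), 0, 1)"

definition phi :: "int \<Rightarrow> nat \<Rightarrow> nat \<Rightarrow> mat2 \<Rightarrow> int" where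
  "phi p r k M = coeff (fst (snd M)) k div p ^ r"

lemma Gamma_mult: "x \<otimes>\<^bsub>Gamma p r\<^esub> y = mat2_mult x y"
  by (simp add: Gamma_def)

lemma Emat_in: "Emat p r k \<in> carrier (Gamma p r)"
  by (simp add: Gamma_def Emat_def poly_zero_mod_def coeff_monom)

lemma Emat_comm: "Emat p r a \<otimes>\<^bsub>Gamma p r\<^esub> Emat p r b = Emat p r b \<otimes>\<^bsub>Gamma p r\<^esub> Emat p r a"
  by (simp add: Gamma_mult Emat_def add.commute)

lemma phi_E: "p \<noteq> 0 \<Longrightarrow> phi p r k (Emat p r n) = (if n = k then 1 else 0)"
  by (simp add: phi_def Emat_def coeff_monom)

lemma pzm_mult:
  assumes "poly_zero_mod m x" "poly_zero_mod m' y"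
  shows "poly_zero_mod (m * m') (x * y)"
  unfolding poly_zero_mod_def
proof
  fix k
  show "m * m' dvd coeff (x * y) k"
    unfolding coeff_mult
    by (rule dvd_sum) (use assms in \<open>auto simp: poly_zero_mod_def intro: mult_dvd_mono\<close>)
qed

lemma phi_add:
  assumes p: "prime p" and r: "r \<ge> 1"
    and x: "x \<in> carrier (Gamma p r)" and y: "y \<in> carrier (Gamma p r)"
  shows "p dvd phi p r k (x \<otimes>\<^bsub>Gamma p r\<^esub> y) - phi p r k x - phi p r k y"
proof -
  obtain a b c d where xe: "x = (a, b, c, d)" by (cases x) auto
  obtain a' b' c' d' where ye: "y = (a', b', c', d')" by (cases y) auto
  define m where "m = p ^ r"
  have m0: "m \<noteq> 0" using p by (simp add: m_def prime_gt_0_int)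
  have pm: "p dvd m" using r by (simp add: m_def dvd_power)
  from x have ha: "poly_zero_mod m (a - 1)" and hb: "poly_zero_mod m b"
    by (simp_all add: Gamma_def xe m_def)
  from y have hb': "poly_zero_mod m b'" and hd': "poly_zero_mod m (d' - 1)"
    by (simp_all add: Gamma_def ye m_def)
  define Z where "Z = (a - 1) * b' + b * (d' - 1)"
  have hZ: "poly_zero_mod (m * m) Z"
    using pzm_mult[OF ha hb'] pzm_mult[OF hb hd'] unfolding Z_def poly_zero_mod_def
    by (simp add: mult.commute)
  have prod: "fst (snd (x \<otimes>\<^bsub>Gamma p r\<^esub> y)) = b' + b + Z"
    by (simp add: Gamma_mult xe ye Z_def algebra_simps)
  obtain \<beta> where b1: "coeff b k = m * \<beta>" using hb unfolding poly_zero_mod_def by blast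
  obtain \<beta>' where b2: "coeff b' k = m * \<beta>'" using hb' unfolding poly_zero_mod_def by blast
  obtain \<gamma> where b3: "coeff Z k = m * m * \<gamma>" using hZ unfolding poly_zero_mod_def by blast
  have "phi p r k (x \<otimes>\<^bsub>Gamma p r\<^esub> y) = (m * (\<beta>' + \<beta> + m * \<gamma>)) div m"
    unfolding phi_def prod m_def[symmetric] by (simp add: b1 b2 b3 algebra_simps)
  also have "\<dots> = \<beta>' + \<beta> + m * \<gamma>" using m0 by simp
  finally have e1: "phi p r k (x \<otimes>\<^bsub>Gamma p r\<^esub> y) = \<beta>' + \<beta> + m * \<gamma>" .
  have e2: "phi p r k x = \<beta>" unfolding phi_def m_def[symmetric] using m0 by (simp add: xe b1)
  have e3: "phi p r k y = \<beta>'" unfolding phi_def m_def[symmetric] using m0 by (simp add: ye b2)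
  show ?thesis using pm by (simp add: e1 e2 e3)
qed



lemma chain_nth: "m < N \<Longrightarrow> chainL e N \<sigma> ! m = e (\<sigma> m)"
  by (simp add: chainL_def del: upt_Suc)

lemma chain_len: "length (chainL e N \<sigma>) = N"
  by (simp add: chainL_def)

theorem theorem5p1:
  fixes j r :: nat and p :: int
  assumes "j \<ge> 1" and "r \<ge> 1" and "prime p"
  shows "\<not> cohom_fin_gen (Gamma p r) p j"
proof
  assume fg: "cohom_fin_gen (Gamma p r) p j"
  obtain n where jn: "j = Suc n" using assms(1) by (cases j) auto
  define G where "G = Gamma p r"
  have p0: "p \<noteq> 0" using assms(3) by auto
  have pgt: "p > 0" using assms(3) prime_gt_0_int by blast
  define e where "e l k = Emat p r (l * j + k)" for l k
  define f where "f l = (\<lambda>gs. \<Prod>m<j. phi p r (l * j + m) (gs ! m))" for l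
  define S where "S = {\<sigma>. \<sigma> permutes {..<j}}"
  have cocyc: "is_cocycle G p j (f l)" for l
    unfolding f_def G_def
    by (rule cup_cocycle) (rule phi_add[OF assms(3) assms(2)])
  have tup: "chainL (e l) j \<sigma> \<in> tuples G j" for l \<sigma>
    by (auto simp: tuples_def chainL_def e_def G_def Emat_in)
  have pcob: "pairing (cobdry G n h) (e l) j = 0" for l h
    unfolding jn by (rule cycle) (simp add: e_def G_def Emat_comm)
  have fval: "f l (chainL (e l') j \<sigma>) = (\<Prod>m<j. if l' * j + \<sigma> m = l * j + m then 1 else 0)" for l l' \<sigma>
    unfolding f_def by (rule prod.cong[OF refl]) (simp add: chain_nth e_def phi_E[OF p0])
  have psame: "pairing (f l) (e l) j = 1" for l
  proof -
    have idS: "id \<in> S" by (simp add: S_def permutes_id)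
    have z: "sign \<sigma> * f l (chainL (e l) j \<sigma>) = 0" if "\<sigma> \<in> S - {id}" for \<sigma>
    proof -
      from that have sp: "\<sigma> permutes {..<j}" and ni: "\<sigma> \<noteq> id" by (auto simp: S_def)
      have "\<exists>m<j. \<sigma> m \<noteq> m"
      proof (rule ccontr)
        assume "\<not> (\<exists>m<j. \<sigma> m \<noteq> m)"
        then have "\<sigma> x = id x" for x using permutes_not_in[OF sp, of x] by (cases "x < j") auto
        then show False using ni by blast
      qed
      then obtain m where m: "m < j" "\<sigma> m \<noteq> m" by blast
      have "f l (chainL (e l) j \<sigma>) = 0" unfolding fval
        by (rule prod_zero) (use m in auto)
      then show ?thesis by simp
    qed
    have "pairing (f l) (e l) j = sign (id::nat\<Rightarrow>nat) * f l (chainL (e l) j id) + (\<Sum>\<sigma>\<in>S - {id}. sign \<sigma> * f l (chainL (e l) j \<sigma>))"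
      unfolding pairing_def S_def[symmetric] by (rule sum.remove) (auto simp: S_def idS finite_permutations)
    also have "(\<Sum>\<sigma>\<in>S - {id}. sign \<sigma> * f l (chainL (e l) j \<sigma>)) = 0"
      using z by (rule sum.neutral[OF ballI])
    finally show ?thesis by (simp add: fval)
  qed
  have pdiff: "pairing (f l) (e l') j = 0" if "l \<noteq> l'" for l l'
    unfolding pairing_def
  proof (rule sum.neutral, rule ballI)
    fix \<sigma> assume "\<sigma> \<in> {\<sigma>. \<sigma> permutes {..<j}}"
    then have "\<sigma> 0 < j" using permutes_in_image[of \<sigma> "{..<j}" 0] jn by auto
    then have ne: "l' * j + \<sigma> 0 \<noteq> l * j + 0"
    proof -
      assume s: "\<sigma> 0 < j"
      show ?thesis
      proof
        assume eq: "l' * j + \<sigma> 0 = l * j + 0"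
        have "(l' * j + \<sigma> 0) div j = l'" using s by simp
        moreover have "(l * j + 0) div j = l" using jn by (metis add_0_right nonzero_mult_div_cancel_right nat.distinct(1))
        ultimately show False using eq that by simp
      qed
    qed
    have "f l (chainL (e l') j \<sigma>) = 0" unfolding fval
      by (rule prod_zero) (use ne jn in \<open>auto intro!: bexI[of _ 0]\<close>)
    then show "sign \<sigma> * f l (chainL (e l') j \<sigma>) = 0" by simp
  qed
  from fg obtain cs where csc: "\<forall>c\<in>set cs. is_cocycle G p j c"
    and span: "\<And>F. is_cocycle G p j F \<Longrightarrow> \<exists>a. is_coboundary G p j (\<lambda>gs. F gs - (\<Sum>k<length cs. a k * (cs ! k) gs))"
    unfolding cohom_fin_gen_def G_def by blast
  define g where "g l = map (\<lambda>c. pairing c (e l) j mod p) cs" for l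
  have "\<not> inj g"
  proof
    assume ig: "inj g"
    have "range g \<subseteq> {xs. set xs \<subseteq> {0..<p} \<and> length xs = length cs}"
      using pgt by (auto simp: g_def)
    moreover have "finite {xs. set xs \<subseteq> {0..<p} \<and> length xs = length cs}"
      by (rule finite_lists_length_eq) simp
    ultimately have "finite (range g)" by (rule finite_subset)
    then have "finite (UNIV :: nat set)" using finite_imageD ig by blast
    then show False by simp
  qed
  then obtain l l' where ll: "l \<noteq> l'" "g l = g l'" unfolding inj_def by blast
  obtain a where "is_coboundary G p j (\<lambda>gs. f l gs - (\<Sum>k<length cs. a k * (cs ! k) gs))"
    using span[OF cocyc] by blast
  then obtain h where hh: "\<forall>gs\<in>tuples G j. p dvd ((f l gs - (\<Sum>k<length cs. a k * (cs ! k) gs)) - cobdry G (j - 1) h gs)"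
    unfolding is_coboundary_def by blast
  have key: "p dvd pairing (f l) (e l'') j - (\<Sum>k<length cs. a k * pairing (cs ! k) (e l'') j)" for l''
  proof -
    define D where "D gs = (f l gs - (\<Sum>k<length cs. a k * (cs ! k) gs)) - cobdry G n h gs" for gs
    have "p dvd (\<Sum>\<sigma>\<in>S. sign \<sigma> * D (chainL (e l'') j \<sigma>))"
      by (rule dvd_sum) (use hh tup jn in \<open>auto simp: D_def\<close>)
    moreover have "(\<Sum>\<sigma>\<in>S. sign \<sigma> * D (chainL (e l'') j \<sigma>))
        = pairing (f l) (e l'') j - (\<Sum>k<length cs. a k * pairing (cs ! k) (e l'') j) - pairing (cobdry G n h) (e l'') j"
    proof -
      let ?c = "chainL (e l'') j"
      have "(\<Sum>\<sigma>\<in>S. sign \<sigma> * D (?c \<sigma>))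
          = (\<Sum>\<sigma>\<in>S. sign \<sigma> * f l (?c \<sigma>) - (\<Sum>k<length cs. a k * (sign \<sigma> * (cs ! k) (?c \<sigma>))) - sign \<sigma> * cobdry G n h (?c \<sigma>))"
        by (rule sum.cong[OF refl]) (simp add: D_def right_diff_distrib sum_distrib_left mult.left_commute)
      also have "\<dots> = (\<Sum>\<sigma>\<in>S. sign \<sigma> * f l (?c \<sigma>)) - (\<Sum>\<sigma>\<in>S. \<Sum>k<length cs. a k * (sign \<sigma> * (cs ! k) (?c \<sigma>))) - (\<Sum>\<sigma>\<in>S. sign \<sigma> * cobdry G n h (?c \<sigma>))"
        by (simp only: sum_subtractf)
      also have "(\<Sum>\<sigma>\<in>S. \<Sum>k<length cs. a k * (sign \<sigma> * (cs ! k) (?c \<sigma>))) = (\<Sum>k<length cs. a k * pairing (cs ! k) (e l'') j)"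
        unfolding pairing_def S_def[symmetric] by (simp only: sum.swap[of _ S] sum_distrib_left)
      finally show ?thesis unfolding pairing_def S_def .
    qed
    ultimately show ?thesis using pcob by simp
  qed
  have k1: "p dvd 1 - (\<Sum>k<length cs. a k * pairing (cs ! k) (e l) j)" using key[of l] psame by simp
  have k2: "p dvd 0 - (\<Sum>k<length cs. a k * pairing (cs ! k) (e l') j)" using key[of l'] pdiff[OF ll(1)] by simp
  have k3: "p dvd (\<Sum>k<length cs. a k * pairing (cs ! k) (e l) j) - (\<Sum>k<length cs. a k * pairing (cs ! k) (e l') j)"
  proof -
    have "(\<Sum>k<length cs. a k * pairing (cs ! k) (e l) j) - (\<Sum>k<length cs. a k * pairing (cs ! k) (e l') j)
        = (\<Sum>k<length cs. a k * (pairing (cs ! k) (e l) j - pairing (cs ! k) (e l') j))"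
      by (simp add: sum_subtractf[symmetric] right_diff_distrib)
    moreover have "p dvd (\<Sum>k<length cs. a k * (pairing (cs ! k) (e l) j - pairing (cs ! k) (e l') j))"
    proof (rule dvd_sum)
      fix k assume "k \<in> {..<length cs}"
      then have "g l ! k = g l' ! k" "k < length cs" using ll(2) by auto
      then have "pairing (cs ! k) (e l) j mod p = pairing (cs ! k) (e l') j mod p" by (simp add: g_def)
      then show "p dvd a k * (pairing (cs ! k) (e l) j - pairing (cs ! k) (e l') j)"
        by (simp add: mod_eq_dvd_iff)
    qed
    ultimately show ?thesis by simp
  qed
  have "p dvd (1 - (\<Sum>k<length cs. a k * pairing (cs ! k) (e l) j)) - (0 - (\<Sum>k<length cs. a k * pairing (cs ! k) (e l') j))
      + ((\<Sum>k<length cs. a k * pairing (cs ! k) (e l) j) - (\<Sum>k<length cs. a k * pairing (cs ! k) (e l') j))"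
    by (rule dvd_add[OF dvd_diff[OF k1 k2] k3])
  then have "is_unit p" by simp
  then show False using assms(3) not_prime_unit by metis
qed


end
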